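(* For every $n\ge1$, the transitive tournament $I_n$ has exactly $F_n$ matching orderings, where $F_0=F_1=1$ and $F_i=F_{i-1}+F_{i-2}$ for $i\ge2$.
   Context: A tournament is a finite, non-null, loopless directed graph in which for any two distinct vertices $u,v$ there is exactly one edge with both ends in $\{u,v\}$; write $u\to v$ for the edge from $u$ to $v$. $I_n$ is the transitive tournament on $n$ vertices, i.e. vertices $v_1,\dots,v_n$ with $v_i\to v_j$ whenever $i<j$. Given an ordering of the vertices, a backedge is an edge from a later vertex to an earlier one; the ordering is a matching ordering if every vertex is the head or tail of at most one backedge. *)

theory Defs
  imports Main
begin

(* A digraph is given by a vertex set V and an edge set E of pairs (tail, head). *)
type_synonym 'a digraph = "'a set \<times> ('a \<times> 'a) set"

definition is_tournament :: "'a digraph \<Rightarrow> bool" where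
  "is_tournament T = (let (V, E) = T in
     finite V \<and> V \<noteq> {} \<and> E \<subseteq> V \<times> V \<and> (\<forall>v. (v, v) \<notin> E) \<and>
     (\<forall>u\<in>V. \<forall>v\<in>V. u \<noteq> v \<longrightarrow> ((u, v) \<in> E \<longleftrightarrow> (v, u) \<notin> E)))"

definition transitive_tournament :: "nat \<Rightarrow> nat digraph" where
  "transitive_tournament n = ({1..n}, {(i, j). i \<in> {1..n} \<and> j \<in> {1..n} \<and> i < j})"

definition orderings :: "'a set \<Rightarrow> 'a list set" where
  "orderings V = {xs. distinct xs \<and> set xs = V}"

definition backedges :: "('a \<times> 'a) set \<Rightarrow> 'a list \<Rightarrow> ('a \<times> 'a) set" where
  "backedges E xs = {(xs ! q, xs ! p) | p q. p < q \<and> q < length xs \<and> (xs ! q, xs ! p) \<in> E}"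

definition matching_ordering :: "'a digraph \<Rightarrow> 'a list \<Rightarrow> bool" where
  "matching_ordering T xs = (let (V, E) = T in
     xs \<in> orderings V \<and>
     (\<forall>v\<in>V. card {e \<in> backedges E xs. fst e = v \<or> snd e = v} \<le> 1))"

fun F :: "nat \<Rightarrow> nat" where
  "F 0 = 1"
| "F (Suc 0) = 1"
| "F (Suc (Suc i)) = F (Suc i) + F i"

end

theory Submission imports Defs begin
lemma backedges_snoc:
  "backedges E (xs @ [x]) = backedges E xs \<union> {(x,y)| y. y \<in> set xs \<and> (x,y) \<in> E}"
proof (rule set_eqI, rule iffI)
  fix e assume "e \<in> backedges E (xs @ [x])"
  then obtain p q where e: "e = ((xs@[x]) ! q, (xs@[x]) ! p)" "p < q" "q < Suc (length xs)"
      "((xs@[x]) ! q, (xs@[x]) ! p) \<in> E" unfolding backedges_def by auto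
  show "e \<in> backedges E xs \<union> {(x,y)| y. y \<in> set xs \<and> (x,y) \<in> E}"
  proof (cases "q < length xs")
    case True thus ?thesis using e unfolding backedges_def by (auto simp: nth_append)
  next
    case False hence "q = length xs" using e by auto
    thus ?thesis using e by (auto simp: nth_append)
  qed
next
  fix e assume "e \<in> backedges E xs \<union> {(x,y)| y. y \<in> set xs \<and> (x,y) \<in> E}"
  thus "e \<in> backedges E (xs @ [x])"
  proof
    assume "e \<in> backedges E xs"
    then obtain p q where e: "e = (xs ! q, xs ! p)" "p < q" "q < length xs"
      "(xs ! q, xs ! p) \<in> E" unfolding backedges_def by auto
    show ?thesis unfolding backedges_def
      by (rule CollectI, rule exI[of _ p], rule exI[of _ q]) (use e in \<open>auto simp: nth_append\<close>)
  next
    assume "e \<in> {(x,y)| y. y \<in> set xs \<and> (x,y) \<in> E}"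
    then obtain y where y: "e = (x,y)" "y \<in> set xs" "(x,y) \<in> E" by auto
    then obtain p where p: "p < length xs" "xs ! p = y" by (auto simp: in_set_conv_nth)
    show ?thesis unfolding backedges_def
      by (rule CollectI, rule exI[of _ p], rule exI[of _ "length xs"]) (use y p in \<open>auto simp: nth_append\<close>)
  qed
qed

lemma backedges_sq: "backedges E xs \<subseteq> set xs \<times> set xs"
  unfolding backedges_def by auto

lemma backedges_cong:
  assumes "set xs \<subseteq> A" "E \<inter> (A\<times>A) = E' \<inter> (A\<times>A)"
  shows "backedges E xs = backedges E' xs"
proof -
  have h: "\<And>p q. q < length xs \<Longrightarrow> p < q \<Longrightarrow> ((xs!q, xs!p) \<in> E) = ((xs!q,xs!p) \<in> E')"
  proof -
    fix p q assume "q < length xs" "p < q"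
    hence "xs!q \<in> A" "xs!p \<in> A" using assms(1) nth_mem by (auto intro!: subsetD[OF assms(1)])
    thus "((xs!q, xs!p) \<in> E) = ((xs!q,xs!p) \<in> E')" using assms(2) by blast
  qed
  show ?thesis unfolding backedges_def
  proof (rule Collect_cong, rule iffI)
    fix e assume "\<exists>p q. e = (xs ! q, xs ! p) \<and> p < q \<and> q < length xs \<and> (xs ! q, xs ! p) \<in> E"
    thus "\<exists>p q. e = (xs ! q, xs ! p) \<and> p < q \<and> q < length xs \<and> (xs ! q, xs ! p) \<in> E'" using h by blast
  next
    fix e assume "\<exists>p q. e = (xs ! q, xs ! p) \<and> p < q \<and> q < length xs \<and> (xs ! q, xs ! p) \<in> E'"
    thus "\<exists>p q. e = (xs ! q, xs ! p) \<and> p < q \<and> q < length xs \<and> (xs ! q, xs ! p) \<in> E" using h by blast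
  qed
qed

lemma backedges_prefix: "backedges E xs \<subseteq> backedges E (xs @ ys)"
proof
  fix e assume "e \<in> backedges E xs"
  then obtain p q where e: "e = (xs ! q, xs ! p)" "p < q" "q < length xs"
      "(xs ! q, xs ! p) \<in> E" unfolding backedges_def by auto
  show "e \<in> backedges E (xs @ ys)" unfolding backedges_def
    by (rule CollectI, rule exI[of _ p], rule exI[of _ q]) (use e in \<open>auto simp: nth_append\<close>)
qed



definition Lt :: "(nat \<times> nat) set" where "Lt = {(i,j). i<j}"
definition D :: "nat list \<Rightarrow> nat \<Rightarrow> (nat \<times> nat) set" where
  "D xs v = {e \<in> backedges Lt xs. fst e = v \<or> snd e = v}"
definition M :: "nat \<Rightarrow> nat list set" where
  "M n = {xs. distinct xs \<and> set xs = {1..n} \<and> (\<forall>v\<in>{1..n}. card (D xs v) \<le> 1)}"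

lemma M_eq: "{xs. matching_ordering (transitive_tournament n) xs} = M n"
proof (rule set_eqI)
  fix xs
  show "xs \<in> {xs. matching_ordering (transitive_tournament n) xs} \<longleftrightarrow> xs \<in> M n"
  proof (cases "distinct xs \<and> set xs = {1..n}")
    case True
    have "backedges {(i, j). i \<in> {1..n} \<and> j \<in> {1..n} \<and> i < j} xs = backedges Lt xs"
      by (rule backedges_cong[where A="{1..n}"]) (use True in \<open>auto simp: Lt_def\<close>)
    thus ?thesis using True
      by (simp add: matching_ordering_def transitive_tournament_def orderings_def M_def D_def)
  next
    case False
    thus ?thesis
      by (auto simp add: matching_ordering_def transitive_tournament_def orderings_def M_def)
  qed
qed

lemma B_snoc_max: "\<forall>y\<in>set ys. y < x \<Longrightarrow> backedges Lt (ys@[x]) = backedges Lt ys"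
  by (auto simp: backedges_snoc Lt_def)

lemma B_two:
  assumes "\<forall>y\<in>set ys. y < a" "a < m"
  shows "backedges Lt (ys@[m,a]) = insert (a,m) (backedges Lt ys)"
proof -
  have "ys@[m,a] = (ys@[m])@[a]" by simp
  moreover have "\<forall>y\<in>set ys. y < m" using assms by auto
  ultimately show ?thesis using backedges_snoc[of Lt "ys@[m]" a] B_snoc_max[of ys m] assms
    by (auto simp: Lt_def)
qed

lemma D_empty: "v \<notin> set ys \<Longrightarrow> D ys v = {}"
  using backedges_sq[of Lt ys] by (auto simp: D_def)

lemma D_finite: "finite (D xs v)"
  by (rule finite_subset[of _ "set xs \<times> set xs"]) (use backedges_sq[of Lt xs] in \<open>auto simp: D_def\<close>)

lemma two_in_D:
  assumes "e1 \<in> D xs v" "e2 \<in> D xs v" "e1 \<noteq> e2"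
  shows "\<not> card (D xs v) \<le> 1"
  using assms D_finite[of xs v] card_le_Suc0_iff_eq[of "D xs v"] by auto

lemma M_step: "M (Suc (Suc n)) = (\<lambda>ys. ys @ [Suc (Suc n)]) ` M (Suc n) \<union> (\<lambda>ys. ys @ [Suc (Suc n), Suc n]) ` M n"
  (is "_ = ?A \<union> ?B")
proof (rule set_eqI, rule iffI)
  fix xs assume xs: "xs \<in> M (Suc (Suc n))"
  define m where "m = Suc (Suc n)"
  have dx: "distinct xs" "set xs = {1..m}" and deg: "\<forall>v\<in>{1..m}. card (D xs v) \<le> 1"
    using xs unfolding M_def m_def by auto
  have "m \<in> set xs" using dx by (simp add: m_def)
  then obtain ys zs where xsd: "xs = ys @ m # zs" using split_list by metis
  have ys_lt: "\<forall>y\<in>set ys. y < m"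
  proof
    fix y assume "y \<in> set ys" hence "y \<in> set xs" "y \<noteq> m" using xsd dx(1) by auto
    hence "y \<le> m" unfolding dx(2) by simp
    thus "y < m" using \<open>y \<noteq> m\<close> by simp
  qed
  have zs_lt: "\<forall>y\<in>set zs. y < m"
  proof
    fix y assume "y \<in> set zs" hence "y \<in> set xs" "y \<noteq> m" using xsd dx(1) by auto
    hence "y \<le> m" unfolding dx(2) by simp
    thus "y < m" using \<open>y \<noteq> m\<close> by simp
  qed
  show "xs \<in> ?A \<union> ?B"
  proof (cases zs)
    case Nil
    hence xs1: "xs = ys @ [m]" using xsd by simp
    have B: "backedges Lt xs = backedges Lt ys" using xs1 B_snoc_max ys_lt by simp
    have "set ys = set xs - {m}" using dx(1) unfolding xs1 by auto
    also have "\<dots> = {1..Suc n}" unfolding dx(2) m_def by auto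
    finally have "set ys = {1..Suc n}" .
    moreover have "distinct ys" using dx xs1 by simp
    moreover have "\<forall>v\<in>{1..Suc n}. card (D ys v) \<le> 1"
    proof
      fix v assume v: "v \<in> {1..Suc n}"
      have "D xs v = D ys v" using B unfolding D_def by simp
      moreover have "card (D xs v) \<le> 1" using deg v unfolding m_def by auto
      ultimately show "card (D ys v) \<le> 1" by simp
    qed
    ultimately have "ys \<in> M (Suc n)" unfolding M_def by simp
    thus ?thesis using xs1 unfolding m_def by auto
  next
    case (Cons a ws)
    have am: "a < m" using zs_lt Cons by simp
    have "a \<in> set xs" using xsd Cons by simp
    hence a1: "a \<in> {1..m}" unfolding dx(2) .
    have Ba: "(a, m) \<in> backedges Lt xs"
    proof -
      have "(a, m) \<in> backedges Lt ((ys@[m])@[a])" unfolding backedges_snoc[of Lt "ys@[m]" a] using am by (auto simp: Lt_def)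
      also have "\<dots> \<subseteq> backedges Lt (((ys@[m])@[a]) @ ws)" by (rule backedges_prefix)
      finally show ?thesis using xsd Cons by simp
    qed
    have wsn: "ws = []"
    proof (rule ccontr)
      assume "ws \<noteq> []"
      then obtain b ws' where ws: "ws = b # ws'" by (cases ws) auto
      have bm: "b < m" using zs_lt Cons ws by simp
      have ab: "a \<noteq> b" using dx(1) xsd Cons ws by auto
      have "(b, m) \<in> backedges Lt ((ys@[m,a])@[b])" unfolding backedges_snoc[of Lt "ys@[m,a]" b] using bm by (auto simp: Lt_def)
      also have "\<dots> \<subseteq> backedges Lt (((ys@[m,a])@[b]) @ ws')" by (rule backedges_prefix)
      finally have "(b, m) \<in> backedges Lt xs" using xsd Cons ws by simp
      hence "\<not> card (D xs m) \<le> 1" using Ba ab by (intro two_in_D[of "(a,m)" _ _ "(b,m)"]) (auto simp: D_def)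
      thus False using deg by (auto simp: m_def)
    qed
    hence xs2: "xs = ys @ [m, a]" using xsd Cons by simp
    have aeq: "a = Suc n"
    proof (rule ccontr)
      assume "a \<noteq> Suc n"
      hence alt: "a < Suc n" using am a1 unfolding m_def by auto
      have "Suc n \<in> set xs" using dx by (simp add: m_def)
      hence "Suc n \<in> set ys" using xs2 \<open>a \<noteq> Suc n\<close> unfolding m_def by auto
      hence "(a, Suc n) \<in> backedges Lt ((ys@[m])@[a])" unfolding backedges_snoc[of Lt "ys@[m]" a] using alt by (auto simp: Lt_def)
      hence "(a, Suc n) \<in> backedges Lt xs" using xs2 by simp
      hence "\<not> card (D xs a) \<le> 1" using Ba
        by (intro two_in_D[of "(a,m)" _ _ "(a, Suc n)"]) (auto simp: D_def m_def)
      thus False using deg a1 by auto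
    qed
    have "set ys = set xs - {m, a}" using dx(1) unfolding xs2 by auto
    also have "\<dots> = {1..n}" unfolding dx(2) aeq m_def by auto
    finally have ys_set: "set ys = {1..n}" .
    have ys_lt2: "\<forall>y\<in>set ys. y < Suc n" using ys_set by auto
    have B: "backedges Lt xs = insert (Suc n, m) (backedges Lt ys)"
      using B_two[OF ys_lt2] xs2 aeq unfolding m_def by simp
    have "distinct ys" using dx xs2 by simp
    moreover have "\<forall>v\<in>{1..n}. card (D ys v) \<le> 1"
    proof
      fix v assume v: "v \<in> {1..n}"
      have "D xs v = D ys v" using B v unfolding D_def m_def by auto
      moreover have "card (D xs v) \<le> 1" using deg v unfolding m_def by auto
      ultimately show "card (D ys v) \<le> 1" by simp
    qed
    ultimately have "ys \<in> M n" using ys_set unfolding M_def by simp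
    thus ?thesis using xs2 aeq unfolding m_def by auto
  qed
next
  fix xs assume "xs \<in> ?A \<union> ?B"
  define m where "m = Suc (Suc n)"
  show "xs \<in> M (Suc (Suc n))"
  proof (cases "xs \<in> ?A")
    case True
    then obtain ys where ys: "ys \<in> M (Suc n)" "xs = ys @ [m]" unfolding m_def by auto
    have ds: "distinct ys" "set ys = {1..Suc n}" and deg: "\<forall>v\<in>{1..Suc n}. card (D ys v) \<le> 1"
      using ys unfolding M_def by auto
    have ylt: "\<forall>y\<in>set ys. y < m" unfolding ds(2) m_def by auto
    have B: "backedges Lt xs = backedges Lt ys" unfolding ys(2) using B_snoc_max[OF ylt] .
    have DD: "D xs v = D ys v" for v using B unfolding D_def by simp
    have "m \<notin> set ys" using ylt by auto
    hence "distinct xs" unfolding ys(2) using ds(1) by simp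
    moreover have "set xs = insert m (set ys)" unfolding ys(2) by simp
    moreover have "insert m (set ys) = {1..m}" unfolding ds(2) m_def by auto
    ultimately have "distinct xs" "set xs = {1..m}" by auto
    moreover have "\<forall>v\<in>{1..m}. card (D xs v) \<le> 1"
    proof
      fix v assume v: "v \<in> {1..m}"
      show "card (D xs v) \<le> 1"
      proof (cases "v = m")
        case True
        hence "D ys v = {}" using \<open>m \<notin> set ys\<close> by (intro D_empty) simp
        thus ?thesis using DD by simp
      next
        case False
        hence "v \<in> {1..Suc n}" using v unfolding m_def by auto
        thus ?thesis using deg DD by auto
      qed
    qed
    ultimately show ?thesis unfolding M_def m_def by simp
  next
    case False
    then obtain ys where ys: "ys \<in> M n" "xs = ys @ [m, Suc n]" using \<open>xs \<in> ?A \<union> ?B\<close> unfolding m_def by auto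
    have ds: "distinct ys" "set ys = {1..n}" and deg: "\<forall>v\<in>{1..n}. card (D ys v) \<le> 1"
      using ys unfolding M_def by auto
    have ylt: "\<forall>y\<in>set ys. y < Suc n" unfolding ds(2) by auto
    have B: "backedges Lt xs = insert (Suc n, m) (backedges Lt ys)"
      unfolding ys(2) by (rule B_two[OF ylt]) (simp add: m_def)
    have "m \<notin> set ys" "Suc n \<notin> set ys" using ylt unfolding m_def by auto
    hence "distinct xs" unfolding ys(2) using ds(1) by (simp add: m_def)
    moreover have "set xs = insert m (insert (Suc n) (set ys))" unfolding ys(2) by simp
    moreover have "insert m (insert (Suc n) (set ys)) = {1..m}" unfolding ds(2) m_def by auto
    ultimately have "distinct xs" "set xs = {1..m}" by auto
    moreover have "\<forall>v\<in>{1..m}. card (D xs v) \<le> 1"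
    proof
      fix v assume v: "v \<in> {1..m}"
      show "card (D xs v) \<le> 1"
      proof (cases "v \<le> n")
        case True
        have "v \<noteq> Suc n" "v \<noteq> m" using True unfolding m_def by auto
        hence "D xs v = D ys v" using B unfolding D_def by auto
        moreover have "v \<in> {1..n}" using v True by auto
        ultimately show ?thesis using deg by auto
      next
        case False
        hence "v \<notin> set ys" unfolding ds(2) by auto
        hence "D ys v = {}" by (rule D_empty)
        hence "D xs v \<subseteq> {(Suc n, m)}" using B unfolding D_def by blast
        hence "card (D xs v) \<le> card {(Suc n, m)}" by (intro card_mono) auto
        thus ?thesis by simp
      qed
    qed
    ultimately show ?thesis unfolding M_def m_def by simp
  qed
qed

lemma M_finite: "finite (M n)"
proof -
  have "M n \<subseteq> {xs. set xs \<subseteq> {1..n} \<and> length xs \<le> n}"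
    unfolding M_def using distinct_card by fastforce
  thus ?thesis using finite_lists_length_le[of "{1..n}" n] finite_subset by auto
qed

lemma M0: "M 0 = {[]}"
  unfolding M_def by auto

lemma M1: "M 1 = {[1]}"
proof -
  have "xs = [1]" if "distinct xs" "set xs = {1::nat}" for xs
  proof -
    have "length xs = 1" using distinct_card[OF that(1)] that(2) by simp
    then obtain x where "xs = [x]" by (cases xs) auto
    thus ?thesis using that by simp
  qed
  moreover have "D [1] 1 = {}" unfolding D_def backedges_def by auto
  ultimately show ?thesis unfolding M_def by auto
qed

lemma card_M: "card (M n) = F n"
proof (induction n rule: F.induct)
  case 1 thus ?case by (simp add: M0)
next
  case 2 thus ?case using M1 by simp
next
  case (3 i)
  have d: "(\<lambda>ys. ys @ [Suc (Suc i)]) ` M (Suc i) \<inter> (\<lambda>ys. ys @ [Suc (Suc i), Suc i]) ` M i = {}"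
    by auto
  have i1: "inj_on (\<lambda>ys. ys @ [Suc (Suc i)]) (M (Suc i))" by (auto simp: inj_on_def)
  have i2: "inj_on (\<lambda>ys. ys @ [Suc (Suc i), Suc i]) (M i)" by (auto simp: inj_on_def)
  show ?case
    unfolding M_step
    by (subst card_Un_disjoint) (use d M_finite i1 i2 3 in \<open>auto simp: card_image\<close>)
qed

theorem corollary5p7:
  fixes n :: nat
  assumes "n \<ge> 1"
  shows "card {xs. matching_ordering (transitive_tournament n) xs} = F n"
  using card_M M_eq by simp

end
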